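(* Let $\Delta_2=\{A=(a_{ij})\in SL_3(\mathfrak{o}) : a_{21}=a_{31}=0\}$. Then $$\Delta_2=\bigsqcup_{y\in Y(\mathfrak{o})}\ \bigsqcup_{d\in D(3)}\ \bigsqcup_{u\in U(3)} \varphi_2(y^{-1})\,d\,u\,\Gamma_\infty(3),$$ i.e. $\Delta_2$ is the union of the sets $\varphi_2(y^{-1})du\Gamma_\infty(3)$ and these sets are pairwise disjoint for distinct triples $(y,d,u)$.
   Context: Let $\omega=e^{2\pi i/3}$, $\mathfrak{o}=\mathbb{Z}[\omega]$, $\mathfrak{o}^\times$ its unit group. Fix representatives of nonzero elements modulo units ("$c\in(\mathfrak{o}-\{0\})/\mathfrak{o}^\times$") and, for each nonzero $c$, representatives of $\mathfrak{o}/c\mathfrak{o}$ ("$a\in\mathfrak{o}/c\mathfrak{o}$"). $Y(\mathfrak{o})=\{\begin{pmatrix}a&b\\c&d\end{pmatrix}\in SL_2(\mathfrak{o}) : c\in(\mathfrak{o}-\{0\})/\mathfrak{o}^\times,\ a\in\mathfrak{o}/c\mathfrak{o}\}\cup\{I_2\}$. $\Gamma(3)=\{A\in SL_3(\mathfrak{o}):A\equiv I_3\pmod{3\mathfrak{o}}\}$ (entrywise), $\Gamma_\infty(3)$ its subgroup of upper triangular unipotent matrices. $D(3)$: diagonal $\mathrm{diag}(i,j,k)$ with $i,j,k\in\mathfrak{o}$, $ijk=1$. $U(3)$: matrices $\begin{pmatrix}1&\alpha&\beta\\&1&\gamma\\&&1\end{pmatrix}$ with $\alpha,\beta,\gamma\in\{0,1,2\}+\{0,1,2\}\omega$.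 For $y=\begin{pmatrix}a&b\\c&d\end{pmatrix}\in SL_2(\mathfrak{o})$, $\varphi_2(y)=\begin{pmatrix}1&0&0\\0&a&b\\0&c&d\end{pmatrix}$. *)

theory Defs
  imports Complex_Main "Jordan_Normal_Form.Determinant"
begin

definition omega :: complex where
  "omega = exp (2 * of_real pi * \<i> / 3)"

definition eis :: "complex set" where
  "eis = {of_int a + of_int b * omega | a b. True}"

definition eis_units :: "complex set" where
  "eis_units = {u \<in> eis. \<exists>v\<in>eis. u * v = 1}"

definition eis_dvd :: "complex \<Rightarrow> complex \<Rightarrow> bool" where
  "eis_dvd c x \<longleftrightarrow> (\<exists>k\<in>eis. x = c * k)"

definition nonzero_reps :: "complex set \<Rightarrow> bool" where
  "nonzero_reps C \<longleftrightarrow> C \<subseteq> eis - {0} \<and>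
     (\<forall>x\<in>eis - {0}. \<exists>!c. c \<in> C \<and> (\<exists>u\<in>eis_units. x = u * c))"

definition residue_reps :: "complex set \<Rightarrow> (complex \<Rightarrow> complex set) \<Rightarrow> bool" where
  "residue_reps C R \<longleftrightarrow> (\<forall>c\<in>C. R c \<subseteq> eis \<and>
     (\<forall>x\<in>eis. \<exists>!r. r \<in> R c \<and> eis_dvd c (x - r)))"

definition SL :: "nat \<Rightarrow> complex mat set" where
  "SL n = {A \<in> carrier_mat n n. det A = 1 \<and> (\<forall>i<n. \<forall>j<n. A $$ (i,j) \<in> eis)}"

(* Y(o), with entries indexed from 0: a = y(0,0), b = y(0,1), c = y(1,0), d = y(1,1) *)
definition Y :: "complex set \<Rightarrow> (complex \<Rightarrow> complex set) \<Rightarrow> complex mat set" where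
  "Y C R = {y \<in> SL 2. y $$ (1,0) \<in> C \<and> y $$ (0,0) \<in> R (y $$ (1,0))} \<union> {1\<^sub>m 2}"

(* inverse of a matrix in SL_2 (adjugate, valid since det = 1) *)
definition inv2 :: "complex mat \<Rightarrow> complex mat" where
  "inv2 y = mat_of_rows_list 2 [[y $$ (1,1), - y $$ (0,1)], [- y $$ (1,0), y $$ (0,0)]]"

definition phi2 :: "complex mat \<Rightarrow> complex mat" where
  "phi2 y = mat_of_rows_list 3 [[1, 0, 0], [0, y $$ (0,0), y $$ (0,1)], [0, y $$ (1,0), y $$ (1,1)]]"

definition Gamma3 :: "complex mat set" where
  "Gamma3 = {A \<in> SL 3. \<forall>i<3. \<forall>j<3. eis_dvd 3 (A $$ (i,j) - (1\<^sub>m 3) $$ (i,j))}"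

definition Gamma_inf3 :: "complex mat set" where
  "Gamma_inf3 = {A \<in> Gamma3. (\<forall>i<3. A $$ (i,i) = 1) \<and> (\<forall>i<3. \<forall>j<i. A $$ (i,j) = 0)}"

definition D3 :: "complex mat set" where
  "D3 = {mat_of_rows_list 3 [[i, 0, 0], [0, j, 0], [0, 0, k]] | i j k.
           i \<in> eis \<and> j \<in> eis \<and> k \<in> eis \<and> i * j * k = 1}"

definition digits3 :: "complex set" where
  "digits3 = {of_int a + of_int b * omega | a b. a \<in> {0,1,2} \<and> b \<in> {0,1,2}}"

definition U3 :: "complex mat set" where
  "U3 = {mat_of_rows_list 3 [[1, \<alpha>, \<beta>], [0, 1, \<gamma>], [0, 0, 1]] | \<alpha> \<beta> \<gamma>.
           \<alpha> \<in> digits3 \<and> \<beta> \<in> digits3 \<and> \<gamma> \<in> digits3}"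

(* Delta_2 = {A in SL_3(o) : a21 = a31 = 0} (0-indexed: entries (1,0),(2,0)) *)
definition Delta2 :: "complex mat set" where
  "Delta2 = {A \<in> SL 3. A $$ (1,0) = 0 \<and> A $$ (2,0) = 0}"

definition piece :: "complex mat \<Rightarrow> complex mat \<Rightarrow> complex mat \<Rightarrow> complex mat set" where
  "piece y d u = {phi2 (inv2 y) * d * u * g | g. g \<in> Gamma_inf3}"

end

theory Submission
  imports Defs
begin


lemma det1: assumes "A \<in> carrier_mat 1 1" shows "det (A::'a::comm_ring_1 mat) = A $$ (0,0)"
proof -
  have "det A = (\<Sum>i<1. A $$ (i,0) * cofactor A i 0)" by (rule laplace_expansion_column[OF assms]) simp
  also have "\<dots> = A $$ (0,0) * cofactor A 0 0" by simp
  also have "cofactor A 0 0 = 1"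
  proof -
    have "mat_delete A 0 0 \<in> carrier_mat 0 0" using mat_delete_carrier[OF assms, of 0 0] by simp
    then show ?thesis unfolding cofactor_def by simp
  qed
  finally show ?thesis by simp
qed

lemma det2: assumes "A \<in> carrier_mat 2 2" shows "det (A::'a::comm_ring_1 mat) = A $$ (0,0) * A $$ (1,1) - A $$ (0,1) * A $$ (1,0)"
proof -
  have d: "dim_row A = 2" "dim_col A = 2" using assms by auto
  have "det A = (\<Sum>i<2. A $$ (i,0) * cofactor A i 0)" by (rule laplace_expansion_column[OF assms]) simp
  also have "\<dots> = A $$ (0,0) * cofactor A 0 0 + A $$ (1,0) * cofactor A 1 0" by (simp add: lessThan_Suc numeral_2_eq_2)
  also have "cofactor A 0 0 = A $$ (1,1)"
  proof -
    have c: "mat_delete A 0 0 \<in> carrier_mat 1 1" using mat_delete_carrier[OF assms, of 0 0] by simp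
    show ?thesis unfolding cofactor_def det1[OF c] by (simp add: mat_delete_def d)
  qed
  also have "cofactor A 1 0 = - A $$ (0,1)"
  proof -
    have c: "mat_delete A 1 0 \<in> carrier_mat 1 1" using mat_delete_carrier[OF assms, of 1 0] by simp
    show ?thesis unfolding cofactor_def det1[OF c] by (simp add: mat_delete_def d)
  qed
  finally show ?thesis by (simp add: algebra_simps)
qed

lemma det3_col0: assumes "A \<in> carrier_mat 3 3" "A $$ (1,0) = 0" "A $$ (2,0) = 0"
  shows "det (A::'a::comm_ring_1 mat) = A $$ (0,0) * (A $$ (1,1) * A $$ (2,2) - A $$ (1,2) * A $$ (2,1))"
proof -
  have d: "dim_row A = 3" "dim_col A = 3" using assms by auto
  have "det A = (\<Sum>i<3. A $$ (i,0) * cofactor A i 0)" by (rule laplace_expansion_column[OF assms(1)]) simp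
  also have "\<dots> = A $$ (0,0) * cofactor A 0 0 + A $$ (1,0) * cofactor A 1 0 + A $$ (2,0) * cofactor A 2 0"
  proof -
    have "{..<3::nat} = {0,1,2}" by auto
    then show ?thesis by (simp add: algebra_simps)
  qed
  also have "cofactor A 0 0 = A $$ (1,1) * A $$ (2,2) - A $$ (1,2) * A $$ (2,1)"
  proof -
    have c: "mat_delete A 0 0 \<in> carrier_mat 2 2" using mat_delete_carrier[OF assms(1), of 0 0] by simp
    show ?thesis unfolding cofactor_def det2[OF c] by (simp add: mat_delete_def d numeral_2_eq_2)
  qed
  finally show ?thesis using assms(2,3) by simp
qed


definition M3 :: "'a \<Rightarrow> 'a \<Rightarrow> 'a \<Rightarrow> 'a \<Rightarrow> 'a \<Rightarrow> 'a \<Rightarrow> 'a \<Rightarrow> 'a \<Rightarrow> 'a \<Rightarrow> 'a mat" where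
  "M3 a b c d e f g h i = mat_of_rows_list 3 [[a,b,c],[d,e,f],[g,h,i]]"

lemma M3_carrier[simp]: "M3 a b c d e f g h i \<in> carrier_mat 3 3"
  "dim_row (M3 a b c d e f g h i) = 3" "dim_col (M3 a b c d e f g h i) = 3"
  by (simp_all add: M3_def mat_of_rows_list_def carrier_matI)

lemma M3_index[simp]:
  "M3 a b c d e f g h i $$ (0,0) = a" "M3 a b c d e f g h i $$ (0,1) = b" "M3 a b c d e f g h i $$ (0,2) = c"
  "M3 a b c d e f g h i $$ (1,0) = d" "M3 a b c d e f g h i $$ (1,1) = e" "M3 a b c d e f g h i $$ (1,2) = f"
  "M3 a b c d e f g h i $$ (2,0) = g" "M3 a b c d e f g h i $$ (2,1) = h" "M3 a b c d e f g h i $$ (2,2) = i"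
  "M3 a b c d e f g h i $$ (0,Suc 0) = b"
  "M3 a b c d e f g h i $$ (Suc 0,0) = d" "M3 a b c d e f g h i $$ (Suc 0,Suc 0) = e" "M3 a b c d e f g h i $$ (Suc 0,2) = f"
  "M3 a b c d e f g h i $$ (2,Suc 0) = h"
  by (simp_all add: M3_def mat_of_rows_list_def)

lemma less3: "(i::nat) < 3 \<longleftrightarrow> i = 0 \<or> i = 1 \<or> i = 2" by auto
lemma less2': "(i::nat) < 2 \<longleftrightarrow> i = 0 \<or> i = 1" by auto

lemma M3_eq: "A \<in> carrier_mat 3 3 \<Longrightarrow> A = M3 (A$$(0,0)) (A$$(0,1)) (A$$(0,2)) (A$$(1,0)) (A$$(1,1)) (A$$(1,2)) (A$$(2,0)) (A$$(2,1)) (A$$(2,2))"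
  by (rule eq_matI) (auto simp: less3)

lemma M3_inj: "M3 a b c d e f g h i = M3 a' b' c' d' e' f' g' h' i' \<longleftrightarrow>
  a = a' \<and> b = b' \<and> c = c' \<and> d = d' \<and> e = e' \<and> f = f' \<and> g = g' \<and> h = h' \<and> i = i'"
  by (metis M3_index)

lemma M3_mult: "M3 a b c d e f g h i * M3 a' b' c' d' e' f' g' h' i' =
  M3 (a*a'+b*d'+c*g') (a*b'+b*e'+c*h') (a*c'+b*f'+c*i')
     (d*a'+e*d'+f*g') (d*b'+e*e'+f*h') (d*c'+e*f'+f*i')
     (g*a'+h*d'+i*g') (g*b'+h*e'+i*h') (g*c'+h*f'+i*i')"
  apply (rule eq_matI)
  apply (auto simp: less3 scalar_prod_def)
  apply (auto simp: M3_def mat_of_rows_list_def col_def row_def numeral_3_eq_3 lessThan_Suc)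
  done

lemma det_M3_col0: "det (M3 a b c 0 e f 0 h (i::'a::comm_ring_1)) = a * (e*i - f*h)"
  by (subst det3_col0) auto

lemma det_M3_ut: "det (M3 a b c 0 e f 0 0 (i::'a::comm_ring_1)) = a * e * i"
  by (subst det3_col0) auto



lemma omega_eq: "omega = Complex (-1/2) (sqrt 3/2)"
proof -
  have "omega = cis (2*pi/3)" unfolding omega_def cis_conv_exp by (simp add: mult.commute)
  also have "\<dots> = Complex (-1/2) (sqrt 3/2)" by (simp add: cis.ctr cos_120 sin_120)
  finally show ?thesis .
qed

lemma omega_sq: "omega * omega = -1 - omega"
  by (simp add: omega_eq complex_eq_iff field_simps)

lemma eis_iff: "x \<in> eis \<longleftrightarrow> (\<exists>a b. x = of_int a + of_int b * omega)"
  by (auto simp: eis_def)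

lemma eis_coeff_inj: "of_int a + of_int b * omega = of_int a' + of_int b' * omega \<Longrightarrow> a = a' \<and> b = b'"
  by (auto simp: omega_eq complex_eq_iff)

lemma eis_add[intro]: "x \<in> eis \<Longrightarrow> y \<in> eis \<Longrightarrow> x + y \<in> eis"
proof -
  assume "x \<in> eis" "y \<in> eis"
  then obtain a b c d where "x = of_int a + of_int b * omega" "y = of_int c + of_int d * omega" by (auto simp: eis_iff)
  then have "x + y = of_int (a+c) + of_int (b+d) * omega" by (simp add: algebra_simps)
  then show ?thesis unfolding eis_iff by blast
qed

lemma eis_uminus[intro]: "x \<in> eis \<Longrightarrow> - x \<in> eis"
proof -
  assume "x \<in> eis"
  then obtain a b where "x = of_int a + of_int b * omega" by (auto simp: eis_iff)
  then have "- x = of_int (-a) + of_int (-b) * omega" by (simp add: algebra_simps)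
  then show ?thesis unfolding eis_iff by blast
qed

lemma eis_diff[intro]: "x \<in> eis \<Longrightarrow> y \<in> eis \<Longrightarrow> x - y \<in> eis"
  using eis_add[of x "-y"] eis_uminus[of y] by simp

lemma eis_mult[intro]: "x \<in> eis \<Longrightarrow> y \<in> eis \<Longrightarrow> x * y \<in> eis"
proof -
  assume "x \<in> eis" "y \<in> eis"
  then obtain a b c d where xy: "x = of_int a + of_int b * omega" "y = of_int c + of_int d * omega" by (auto simp: eis_iff)
  have "x * y = of_int a * of_int c + (of_int a * of_int d + of_int b * of_int c) * omega + of_int b * of_int d * (omega * omega)"
    unfolding xy by (simp add: algebra_simps)
  also have "\<dots> = of_int (a*c - b*d) + of_int (a*d + b*c - b*d) * omega"
    unfolding omega_sq by (simp add: algebra_simps)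
  finally show ?thesis unfolding eis_iff by blast
qed

lemma eis_of_int[simp, intro]: "of_int n \<in> eis"
  unfolding eis_iff by (rule exI[of _ n], rule exI[of _ 0]) simp

lemma eis_0[simp, intro]: "0 \<in> eis" using eis_of_int[of 0] by simp
lemma eis_1[simp, intro]: "1 \<in> eis" using eis_of_int[of 1] by simp
lemma eis_3[simp, intro]: "3 \<in> eis" using eis_of_int[of 3] by simp

lemma eis_dvd_add: "eis_dvd c a \<Longrightarrow> eis_dvd c b \<Longrightarrow> eis_dvd c (a + b)"
  unfolding eis_dvd_def by (metis distrib_left eis_add)
lemma eis_dvd_diff: "eis_dvd c a \<Longrightarrow> eis_dvd c b \<Longrightarrow> eis_dvd c (a - b)"
  unfolding eis_dvd_def by (metis right_diff_distrib eis_diff)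
lemma eis_dvd_mult: "eis_dvd c a \<Longrightarrow> y \<in> eis \<Longrightarrow> eis_dvd c (y * a)"
  unfolding eis_dvd_def by (metis mult.left_commute eis_mult)
lemma eis_dvd_0: "eis_dvd c 0"
  unfolding eis_dvd_def by (rule bexI[of _ 0]) auto

lemma digits3_sub: "digits3 \<subseteq> eis"
  by (auto simp: digits3_def eis_def)

lemma digits3_exists: "x \<in> eis \<Longrightarrow> \<exists>r\<in>digits3. eis_dvd 3 (x - r)"
proof -
  assume "x \<in> eis"
  then obtain a b where x: "x = of_int a + of_int b * omega" by (auto simp: eis_iff)
  define r where "r = of_int (a mod 3) + of_int (b mod 3) * omega"
  have rd: "r \<in> digits3" unfolding r_def digits3_def
    apply (rule CollectI, rule exI[of _ "a mod 3"], rule exI[of _ "b mod 3"])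
    by auto
  have "x - r = 3 * (of_int (a div 3) + of_int (b div 3) * omega)"
  proof -
    have ha: "(of_int a::complex) = of_int (a mod 3) + 3 * of_int (a div 3)"
    proof - have "a = a mod 3 + 3*(a div 3)" by simp
      hence "(of_int a::complex) = of_int (a mod 3 + 3*(a div 3))" by (rule arg_cong)
      thus ?thesis by (simp only: of_int_add of_int_mult of_int_numeral) qed
    have hb: "(of_int b::complex) = of_int (b mod 3) + 3 * of_int (b div 3)"
    proof - have "b = b mod 3 + 3*(b div 3)" by simp
      hence "(of_int b::complex) = of_int (b mod 3 + 3*(b div 3))" by (rule arg_cong)
      thus ?thesis by (simp only: of_int_add of_int_mult of_int_numeral) qed
    show ?thesis unfolding x r_def by (subst ha, subst hb, simp add: algebra_simps)
  qed
  moreover have "of_int (a div 3) + of_int (b div 3) * omega \<in> eis" unfolding eis_iff by blast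
  ultimately have "eis_dvd 3 (x - r)" unfolding eis_dvd_def by blast
  then show ?thesis using rd by blast
qed

lemma digits3_unique: "r \<in> digits3 \<Longrightarrow> r' \<in> digits3 \<Longrightarrow> eis_dvd 3 (r - r') \<Longrightarrow> r = r'"
proof -
  assume "r \<in> digits3" "r' \<in> digits3" "eis_dvd 3 (r - r')"
  then obtain a b a' b' m where ab: "r = of_int a + of_int b * omega" "a \<in> {0,1,2}" "b \<in> {0,1,2}"
    and ab': "r' = of_int a' + of_int b' * omega" "a' \<in> {0,1,2}" "b' \<in> {0,1,2}"
    and m: "m \<in> eis" "r - r' = 3 * m"
    unfolding digits3_def eis_dvd_def by blast
  obtain c d where cd: "m = of_int c + of_int d * omega" using m by (auto simp: eis_iff)
  have "of_int (a - a') + of_int (b - b') * omega = of_int (3*c) + of_int (3*d) * omega"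
    using m(2) unfolding ab ab' cd by (simp add: algebra_simps)
  from eis_coeff_inj[OF this] have "a - a' = 3 * c" "b - b' = 3 * d" by auto
  with ab(2,3) ab'(2,3) have "a = a'" "b = b'" by (auto; presburger)+
  then show ?thesis using ab ab' by simp
qed

lemma units_iff: "u \<in> eis_units \<longleftrightarrow> u \<in> eis \<and> u \<noteq> 0 \<and> inverse u \<in> eis"
proof
  assume "u \<in> eis_units"
  then obtain v where "u \<in> eis" "v \<in> eis" "u * v = 1" unfolding eis_units_def by blast
  moreover from \<open>u * v = 1\<close> have "inverse u = v" by (simp add: inverse_unique)
  ultimately show "u \<in> eis \<and> u \<noteq> 0 \<and> inverse u \<in> eis" by auto
next
  assume "u \<in> eis \<and> u \<noteq> 0 \<and> inverse u \<in> eis"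
  then show "u \<in> eis_units" unfolding eis_units_def by (auto intro!: bexI[of _ "inverse u"])
qed



lemma dvd3_eis: "eis_dvd 3 x \<Longrightarrow> x \<in> eis"
  unfolding eis_dvd_def by auto

lemma one3_index[simp]: "(1\<^sub>m 3 :: complex mat) $$ (0,0) = 1" "(1\<^sub>m 3 :: complex mat) $$ (0,Suc 0) = 0"
  "(1\<^sub>m 3 :: complex mat) $$ (0,2) = 0" "(1\<^sub>m 3 :: complex mat) $$ (Suc 0,0) = 0"
  "(1\<^sub>m 3 :: complex mat) $$ (Suc 0,Suc 0) = 1" "(1\<^sub>m 3 :: complex mat) $$ (Suc 0,2) = 0"
  "(1\<^sub>m 3 :: complex mat) $$ (2,0) = 0" "(1\<^sub>m 3 :: complex mat) $$ (2,Suc 0) = 0"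
  "(1\<^sub>m 3 :: complex mat) $$ (2,2) = 1"
  by simp_all

lemma SL3_M3: "M3 a b c d e f g h i \<in> SL 3 \<longleftrightarrow> det (M3 a b c d e f g h i) = 1 \<and>
   a \<in> eis \<and> b \<in> eis \<and> c \<in> eis \<and> d \<in> eis \<and> e \<in> eis \<and> f \<in> eis \<and> g \<in> eis \<and> h \<in> eis \<and> i \<in> eis"
  unfolding SL_def by (auto simp: less3)

lemma Gamma_inf3_iff: "G \<in> Gamma_inf3 \<longleftrightarrow> (\<exists>x z w. G = M3 1 x z 0 1 w 0 0 1 \<and> eis_dvd 3 x \<and> eis_dvd 3 z \<and> eis_dvd 3 w)"
proof
  assume G: "G \<in> Gamma_inf3"
  then have car: "G \<in> carrier_mat 3 3" unfolding Gamma_inf3_def Gamma3_def SL_def by auto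
  from G have d: "\<forall>i<3. G $$ (i,i) = 1" and l: "\<forall>i<3. \<forall>j<i. G $$ (i,j) = 0"
    and c: "\<forall>i<3. \<forall>j<3. eis_dvd 3 (G $$ (i,j) - (1\<^sub>m 3) $$ (i,j))"
    unfolding Gamma_inf3_def Gamma3_def by auto
  have "G = M3 1 (G$$(0,1)) (G$$(0,2)) 0 1 (G$$(1,2)) 0 0 1"
    apply (subst M3_eq[OF car])
    using d l by (auto simp: M3_inj less3)
  moreover have "eis_dvd 3 (G$$(0,1))" "eis_dvd 3 (G$$(0,2))" "eis_dvd 3 (G$$(1,2))"
    using c[rule_format, of 0 1] c[rule_format, of 0 2] c[rule_format, of 1 2] by auto
  ultimately show "\<exists>x z w. G = M3 1 x z 0 1 w 0 0 1 \<and> eis_dvd 3 x \<and> eis_dvd 3 z \<and> eis_dvd 3 w" by blast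
next
  assume "\<exists>x z w. G = M3 1 x z 0 1 w 0 0 1 \<and> eis_dvd 3 x \<and> eis_dvd 3 z \<and> eis_dvd 3 w"
  then obtain x z w where G: "G = M3 1 x z 0 1 w 0 0 1" and dv: "eis_dvd 3 x" "eis_dvd 3 z" "eis_dvd 3 w" by blast
  have "G \<in> SL 3" unfolding G SL3_M3 det_M3_ut using dv by (auto intro: dvd3_eis)
  moreover have "\<forall>i<3. \<forall>j<3. eis_dvd 3 (G $$ (i,j) - (1\<^sub>m 3) $$ (i,j))"
    using dv by (auto simp: less3 G eis_dvd_0)
  ultimately show "G \<in> Gamma_inf3" unfolding Gamma_inf3_def Gamma3_def by (auto simp: less3 less2' G)
qed

lemma D3_iff: "D \<in> D3 \<longleftrightarrow> (\<exists>i j k. D = M3 i 0 0 0 j 0 0 0 k \<and> i \<in> eis \<and> j \<in> eis \<and> k \<in> eis \<and> i*j*k = 1)"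
  unfolding D3_def M3_def by blast

lemma U3_iff: "U \<in> U3 \<longleftrightarrow> (\<exists>\<alpha> \<beta> \<gamma>. U = M3 1 \<alpha> \<beta> 0 1 \<gamma> 0 0 1 \<and> \<alpha> \<in> digits3 \<and> \<beta> \<in> digits3 \<and> \<gamma> \<in> digits3)"
  unfolding U3_def M3_def by blast

lemma phi2_eq: "phi2 y = M3 1 0 0 0 (y$$(0,0)) (y$$(0,1)) 0 (y$$(1,0)) (y$$(1,1))"
  unfolding phi2_def M3_def by simp

lemma inv2_index[simp]: "inv2 y $$ (0,0) = y $$ (1,1)" "inv2 y $$ (0,1) = - y $$ (0,1)"
  "inv2 y $$ (1,0) = - y $$ (1,0)" "inv2 y $$ (1,1) = y $$ (0,0)"
  "inv2 y $$ (0,Suc 0) = - y $$ (0,1)" "inv2 y $$ (Suc 0,0) = - y $$ (1,0)" "inv2 y $$ (Suc 0,Suc 0) = y $$ (0,0)"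
  unfolding inv2_def by (simp_all add: mat_of_rows_list_def)

lemma phi2_inv2: "phi2 (inv2 y) = M3 1 0 0 0 (y$$(1,1)) (- y$$(0,1)) 0 (- y$$(1,0)) (y$$(0,0))"
  unfolding phi2_eq by simp

lemma SL2_facts: "y \<in> SL 2 \<Longrightarrow> y \<in> carrier_mat 2 2 \<and> y$$(0,0) \<in> eis \<and> y$$(0,1) \<in> eis \<and> y$$(1,0) \<in> eis \<and> y$$(1,1) \<in> eis
   \<and> y$$(0,0) * y$$(1,1) - y$$(0,1) * y$$(1,0) = 1"
  unfolding SL_def using det2[of y] by auto

lemma mat2_eqI: "y \<in> carrier_mat 2 2 \<Longrightarrow> y' \<in> carrier_mat 2 2 \<Longrightarrow> y$$(0,0) = y'$$(0,0) \<Longrightarrow> y$$(0,1) = y'$$(0,1)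
  \<Longrightarrow> y$$(1,0) = y'$$(1,0) \<Longrightarrow> y$$(1,1) = y'$$(1,1) \<Longrightarrow> y = y'"
  apply (rule eq_matI)
  apply (auto dest!: carrier_matD)
  by (metis One_nat_def less_2_cases)

lemma Y_facts:
  assumes "nonzero_reps C" "y \<in> Y C R"
  shows "y \<in> carrier_mat 2 2 \<and> y$$(0,0) \<in> eis \<and> y$$(0,1) \<in> eis \<and> y$$(1,0) \<in> eis \<and> y$$(1,1) \<in> eis
   \<and> y$$(0,0) * y$$(1,1) - y$$(0,1) * y$$(1,0) = 1
   \<and> (y$$(1,0) = 0 \<longrightarrow> y = 1\<^sub>m 2) \<and> (y$$(1,0) \<noteq> 0 \<longrightarrow> y$$(1,0) \<in> C \<and> y$$(0,0) \<in> R (y$$(1,0)))"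
proof (cases "y = 1\<^sub>m 2")
  case True
  then show ?thesis by simp
next
  case False
  with assms(2) have y: "y \<in> SL 2" "y$$(1,0) \<in> C" "y$$(0,0) \<in> R (y$$(1,0))" unfolding Y_def by auto
  from y(2) assms(1) have "y$$(1,0) \<noteq> 0" unfolding nonzero_reps_def by auto
  with SL2_facts[OF y(1)] y show ?thesis by auto
qed



lemma prod_formula:
  "M3 1 0 0 0 dd (-b) 0 (-c) (a::complex) * M3 i 0 0 0 j 0 0 0 k * M3 1 \<alpha> \<beta> 0 1 \<gamma> 0 0 1 * M3 1 x z 0 1 w 0 0 1
   = M3 i (i*(\<alpha>+x)) (i*(z+\<alpha>*w+\<beta>)) 0 (dd*j) (dd*j*(\<gamma>+w) - b*k) 0 (-c*j) (-c*j*(\<gamma>+w) + a*k)"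
  by (simp add: M3_mult M3_inj algebra_simps)

lemma piece_sub:
  assumes "nonzero_reps C" "y \<in> Y C R" "D \<in> D3" "U \<in> U3" "G \<in> Gamma_inf3"
  shows "phi2 (inv2 y) * D * U * G \<in> Delta2"
proof -
  obtain i j k where D: "D = M3 i 0 0 0 j 0 0 0 k" "i \<in> eis" "j \<in> eis" "k \<in> eis" "i*j*k = 1"
    using assms(3) D3_iff by blast
  obtain \<alpha> \<beta> \<gamma> where U: "U = M3 1 \<alpha> \<beta> 0 1 \<gamma> 0 0 1" "\<alpha> \<in> eis" "\<beta> \<in> eis" "\<gamma> \<in> eis"
    using assms(4) U3_iff digits3_sub by blast
  obtain x z w where G: "G = M3 1 x z 0 1 w 0 0 1" "x \<in> eis" "z \<in> eis" "w \<in> eis"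
    using assms(5) Gamma_inf3_iff dvd3_eis by blast
  define a b c dd where "a = y$$(0,0)" "b = y$$(0,1)" "c = y$$(1,0)" "dd = y$$(1,1)"
  have y: "a \<in> eis" "b \<in> eis" "c \<in> eis" "dd \<in> eis" "a*dd - b*c = 1"
    using Y_facts[OF assms(1,2)] unfolding a_b_c_dd_def by auto
  have P: "phi2 (inv2 y) * D * U * G = M3 i (i*(\<alpha>+x)) (i*(z+\<alpha>*w+\<beta>)) 0 (dd*j) (dd*j*(\<gamma>+w) - b*k) 0 (-c*j) (-c*j*(\<gamma>+w) + a*k)"
    unfolding phi2_inv2 D(1) U(1) G(1) a_b_c_dd_def[symmetric] prod_formula ..
  have "det (M3 i (i*(\<alpha>+x)) (i*(z+\<alpha>*w+\<beta>)) 0 (dd*j) (dd*j*(\<gamma>+w) - b*k) 0 (-c*j) (-c*j*(\<gamma>+w) + a*k))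
     = i*j*k*(a*dd - b*c)"
    by (subst det3_col0) (auto simp: algebra_simps)
  also have "\<dots> = 1" using D(5) y(5) by simp
  finally have "det (phi2 (inv2 y) * D * U * G) = 1" unfolding P .
  then show ?thesis unfolding Delta2_def P using D U G y by (auto simp: SL3_M3 eis_mult eis_add eis_diff eis_uminus)
qed



lemma ut_decomp:
  assumes "p \<in> eis" "q \<in> eis" "r \<in> eis" "e \<in> eis" "f \<in> eis" "h \<in> eis" "p*e*h = 1"
  shows "\<exists>D\<in>D3. \<exists>U\<in>U3. \<exists>G\<in>Gamma_inf3. M3 p q r 0 e f 0 0 h = D*U*G"
proof -
  define q' f' r' where "q' = q*e*h" "f' = f*p*h" "r' = r*e*h"
  have e': "q' \<in> eis" "f' \<in> eis" "r' \<in> eis" using assms unfolding q'_f'_r'_def by auto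
  obtain \<alpha> where \<alpha>: "\<alpha> \<in> digits3" "eis_dvd 3 (q' - \<alpha>)" using digits3_exists e' by blast
  obtain \<gamma> where \<gamma>: "\<gamma> \<in> digits3" "eis_dvd 3 (f' - \<gamma>)" using digits3_exists e' by blast
  define x w where "x = q' - \<alpha>" "w = f' - \<gamma>"
  have "r' - \<alpha>*w \<in> eis" using e' \<alpha> \<gamma> digits3_sub unfolding x_w_def by auto
  then obtain \<beta> where \<beta>: "\<beta> \<in> digits3" "eis_dvd 3 (r' - \<alpha>*w - \<beta>)" using digits3_exists by blast
  define z where "z = r' - \<alpha>*w - \<beta>"
  have "M3 p 0 0 0 e 0 0 0 h \<in> D3" unfolding D3_iff using assms by blast
  moreover have "M3 1 \<alpha> \<beta> 0 1 \<gamma> 0 0 1 \<in> U3" unfolding U3_iff using \<alpha> \<beta> \<gamma> by blast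
  moreover have "M3 1 x z 0 1 w 0 0 1 \<in> Gamma_inf3" unfolding Gamma_inf3_iff using \<alpha> \<beta> \<gamma>
    unfolding x_w_def z_def by blast
  moreover have "M3 p q r 0 e f 0 0 h = M3 p 0 0 0 e 0 0 0 h * M3 1 \<alpha> \<beta> 0 1 \<gamma> 0 0 1 * M3 1 x z 0 1 w 0 0 1"
  proof -
    have "p*(\<alpha>+x) = q*(p*e*h)" "e*(\<gamma>+w) = f*(p*e*h)" "p*(z+\<alpha>*w+\<beta>) = r*(p*e*h)"
      unfolding x_w_def z_def q'_f'_r'_def by (simp_all add: algebra_simps)
    then have "p*(\<alpha>+x) = q" "e*(\<gamma>+w) = f" "p*(z+\<alpha>*w+\<beta>) = r"
      using assms(7) by simp_all
    then show ?thesis by (simp add: M3_mult M3_inj algebra_simps)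
  qed
  ultimately show ?thesis by blast
qed

lemma reduce:
  assumes "y$$(0,0) * y$$(1,1) - y$$(0,1) * y$$(1,0) = 1" "y$$(1,0) * e + y$$(1,1) * g = 0"
  shows "M3 p q r 0 e f 0 g h = phi2 (inv2 y) * M3 p q r 0 (y$$(0,0) * e + y$$(0,1) * g) (y$$(0,0) * f + y$$(0,1) * h)
     0 0 (y$$(1,0) * f + y$$(1,1) * h)"
proof -
  define a b c dd where "a = y$$(0,0)" "b = y$$(0,1)" "c = y$$(1,0)" "dd = y$$(1,1)"
  have h: "a*dd - b*c = 1" "c*e + dd*g = 0" using assms unfolding a_b_c_dd_def by auto
  have "e = dd*(a*e+b*g)" "f = dd*(a*f+b*h) - b*(c*f+dd*h)" "g = -c*(a*e+b*g)" "h = -c*(a*f+b*h) + a*(c*f+dd*h)"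
  proof -
    have "dd*(a*e+b*g) = (a*dd - b*c)*e + b*(c*e+dd*g)" by (simp add: algebra_simps)
    then show "e = dd*(a*e+b*g)" using h by simp
    have "dd*(a*f+b*h) - b*(c*f+dd*h) = (a*dd - b*c)*f" by (simp add: algebra_simps)
    then show "f = dd*(a*f+b*h) - b*(c*f+dd*h)" using h by simp
    have "-c*(a*e+b*g) = (a*dd - b*c)*g - a*(c*e+dd*g)" by (simp add: algebra_simps)
    then show "g = -c*(a*e+b*g)" using h by simp
    have "-c*(a*f+b*h) + a*(c*f+dd*h) = (a*dd - b*c)*h" by (simp add: algebra_simps)
    then show "h = -c*(a*f+b*h) + a*(c*f+dd*h)" using h by simp
  qed
  then show ?thesis unfolding phi2_inv2 a_b_c_dd_def[symmetric] M3_mult M3_inj by simp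
qed



lemma less2: "(i::nat) < 2 \<longleftrightarrow> i = 0 \<or> i = 1" by auto

lemma in_piece_from_N:
  assumes "y \<in> Y C R" "nonzero_reps C" "A \<in> carrier_mat 3 3" "A $$ (1,0) = 0" "A $$ (2,0) = 0" "det A = 1"
    and "\<forall>i<3. \<forall>j<3. A $$ (i,j) \<in> eis"
    and cz: "y$$(1,0) * A$$(1,1) + y$$(1,1) * A$$(2,1) = 0"
  shows "\<exists>D\<in>D3. \<exists>U\<in>U3. A \<in> piece y D U"
proof -
  define p q r e f g h where "p = A$$(0,0)" "q = A$$(0,1)" "r = A$$(0,2)" "e = A$$(1,1)" "f = A$$(1,2)" "g = A$$(2,1)" "h = A$$(2,2)"
  have A: "A = M3 p q r 0 e f 0 g h" using M3_eq[OF assms(3)] assms(4,5) unfolding p_q_r_e_f_g_h_def by simp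
  have ent: "p \<in> eis" "q \<in> eis" "r \<in> eis" "e \<in> eis" "f \<in> eis" "g \<in> eis" "h \<in> eis"
    using assms(7) unfolding p_q_r_e_f_g_h_def by (auto simp: less3)
  have dA: "p * (e*h - f*g) = 1" using assms(6) unfolding A det_M3_col0 by simp
  define a b c dd where "a = y$$(0,0)" "b = y$$(0,1)" "c = y$$(1,0)" "dd = y$$(1,1)"
  have y: "a \<in> eis" "b \<in> eis" "c \<in> eis" "dd \<in> eis" "a*dd - b*c = 1"
    using Y_facts[OF assms(2,1)] unfolding a_b_c_dd_def by auto
  have cz': "c*e + dd*g = 0" using cz unfolding a_b_c_dd_def p_q_r_e_f_g_h_def .
  have AN: "A = phi2 (inv2 y) * M3 p q r 0 (a*e + b*g) (a*f + b*h) 0 0 (c*f + dd*h)"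
    unfolding A a_b_c_dd_def by (rule reduce) (use y cz' in \<open>auto simp: a_b_c_dd_def\<close>)
  have "p*(a*e + b*g)*(c*f + dd*h) = p*(a*dd - b*c)*(e*h - f*g) + p*(a*f+b*h)*(c*e + dd*g)"
    by (simp add: algebra_simps)
  then have "p*(a*e + b*g)*(c*f + dd*h) = 1" using y(5) cz' dA by simp
  then obtain D U G where DUG: "D \<in> D3" "U \<in> U3" "G \<in> Gamma_inf3"
     "M3 p q r 0 (a*e + b*g) (a*f + b*h) 0 0 (c*f + dd*h) = D*U*G"
    using ut_decomp[of p q r "a*e + b*g" "a*f + b*h" "c*f + dd*h"] ent y by blast
  have car: "D \<in> carrier_mat 3 3" "U \<in> carrier_mat 3 3" "G \<in> carrier_mat 3 3" "phi2 (inv2 y) \<in> carrier_mat 3 3"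
    using DUG(1-3) by (auto simp: D3_iff U3_iff Gamma_inf3_iff phi2_inv2)
  have "A = phi2 (inv2 y) * D * U * G"
    unfolding AN DUG(4) using car by (simp add: assoc_mult_mat[of _ 3 3 _ 3 _ 3])
  then show ?thesis unfolding piece_def using DUG by blast
qed

lemma exist:
  assumes C: "nonzero_reps C" and R: "residue_reps C R" and A: "A \<in> Delta2"
  shows "\<exists>y\<in>Y C R. \<exists>D\<in>D3. \<exists>U\<in>U3. A \<in> piece y D U"
proof -
  from A have A': "A \<in> carrier_mat 3 3" "A $$ (1,0) = 0" "A $$ (2,0) = 0" "det A = 1"
    "\<forall>i<3. \<forall>j<3. A $$ (i,j) \<in> eis" unfolding Delta2_def SL_def by auto
  define p q r e f g h where "p = A$$(0,0)" "q = A$$(0,1)" "r = A$$(0,2)" "e = A$$(1,1)" "f = A$$(1,2)" "g = A$$(2,1)" "h = A$$(2,2)"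
  have Aeq: "A = M3 p q r 0 e f 0 g h" using M3_eq[OF A'(1)] A'(2,3) unfolding p_q_r_e_f_g_h_def by simp
  have ent: "p \<in> eis" "q \<in> eis" "r \<in> eis" "e \<in> eis" "f \<in> eis" "g \<in> eis" "h \<in> eis"
    using A'(5) unfolding p_q_r_e_f_g_h_def by (auto simp: less3)
  have dA: "p * (e*h - f*g) = 1" using A'(4) unfolding Aeq det_M3_col0 by simp
  show ?thesis
  proof (cases "g = 0")
    case True
    have "1\<^sub>m 2 \<in> Y C R" unfolding Y_def by simp
    moreover have "(1\<^sub>m 2::complex mat)$$(1,0) * A$$(1,1) + (1\<^sub>m 2::complex mat)$$(1,1) * A$$(2,1) = 0"
      using True unfolding p_q_r_e_f_g_h_def by simp
    ultimately show ?thesis using in_piece_from_N[OF _ C A'] by blast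
  next
    case False
    then have "g \<in> eis - {0}" using ent by auto
    with C obtain c v where cv: "c \<in> C" "v \<in> eis_units" "g = v * c" unfolding nonzero_reps_def by blast
    have c: "c \<in> eis" "c \<noteq> 0" using cv(1) C unfolding nonzero_reps_def by auto
    have v: "v \<in> eis" "v \<noteq> 0" "inverse v \<in> eis" using cv(2) units_iff by auto
    define dd where "dd = - e * inverse v"
    define a0 b0 where "a0 = - v * h * p" "b0 = v * f * p"
    have "a0 * dd - b0 * c = p * (e*h - f*g)" unfolding a0_b0_def dd_def cv(3) using v(2)
      by (simp add: algebra_simps)
    then have ab0: "a0 * dd - b0 * c = 1" using dA by simp
    have dde: "dd \<in> eis" "a0 \<in> eis" "b0 \<in> eis" unfolding dd_def a0_b0_def using ent v by auto
    from R cv(1) dde(2) obtain a where a: "a \<in> R c" "eis_dvd c (a0 - a)" unfolding residue_reps_def by blast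
    have aeis: "a \<in> eis" using R cv(1) a(1) unfolding residue_reps_def by auto
    from a(2) obtain m where m: "m \<in> eis" "a0 - a = c * m" unfolding eis_dvd_def by blast
    define b where "b = b0 - dd * m"
    have det1: "a * dd - b * c = 1"
    proof -
      have "a = a0 - c*m" by (simp add: m(2)[symmetric])
      then have "a * dd - b * c = (a0 - c*m)*dd - (b0 - dd*m)*c" unfolding b_def by simp
      also have "\<dots> = a0*dd - b0*c" by (simp add: algebra_simps)
      finally have "a * dd - b * c = a0*dd - b0*c" .
      then show ?thesis using ab0 by simp
    qed
    define y where "y = mat_of_rows_list 2 [[a, b], [c, dd]]"
    have yi: "y$$(0,0) = a" "y$$(0,1) = b" "y$$(1,0) = c" "y$$(1,1) = dd" "y \<in> carrier_mat 2 2"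
      unfolding y_def by (simp_all add: mat_of_rows_list_def carrier_matI)
    have "y \<in> SL 2" unfolding SL_def using det2[OF yi(5)] det1 yi aeis dde m c
      by (auto simp: less2 b_def)
    then have yY: "y \<in> Y C R" unfolding Y_def using yi cv(1) a(1) by auto
    have "y$$(1,0) * A$$(1,1) + y$$(1,1) * A$$(2,1) = 0"
      unfolding yi p_q_r_e_f_g_h_def[symmetric] dd_def cv(3) using v(2) by (simp add: algebra_simps)
    then show ?thesis using in_piece_from_N[OF yY C A'] yY by blast
  qed
qed



lemma unit_from_prod: "i \<in> eis \<Longrightarrow> j \<in> eis \<Longrightarrow> k \<in> eis \<Longrightarrow> i*j*k = 1 \<Longrightarrow> i \<noteq> 0 \<and> inverse i \<in> eis"
proof -
  assume h: "i \<in> eis" "j \<in> eis" "k \<in> eis" "i*j*k = 1"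
  then have "i \<noteq> 0" by auto
  moreover have "inverse i = j*k" using h(4) by (simp add: inverse_unique mult.assoc)
  ultimately show ?thesis using h by auto
qed

lemma digit_eq: "r \<in> digits3 \<Longrightarrow> r' \<in> digits3 \<Longrightarrow> eis_dvd 3 s \<Longrightarrow> eis_dvd 3 s' \<Longrightarrow> r + s = r' + s' \<Longrightarrow> r = r'"
proof -
  assume h: "r \<in> digits3" "r' \<in> digits3" "eis_dvd 3 s" "eis_dvd 3 s'" "r + s = r' + s'"
  have "r - r' = s' - s" using h(5) by (simp add: algebra_simps)
  then have "eis_dvd 3 (r - r')" using eis_dvd_diff[OF h(4,3)] by simp
  then show ?thesis using digits3_unique h(1,2) by blast
qed

lemma disjoint:
  assumes C: "nonzero_reps C" and R: "residue_reps C R"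
    and yY: "y \<in> Y C R" and yY': "y' \<in> Y C R"
    and DD: "D \<in> D3" "D' \<in> D3" and UU: "U \<in> U3" "U' \<in> U3" and GG: "G \<in> Gamma_inf3" "G' \<in> Gamma_inf3"
    and eq: "phi2 (inv2 y) * D * U * G = phi2 (inv2 y') * D' * U' * G'"
  shows "y = y' \<and> D = D' \<and> U = U'"
proof -
  obtain i j k where D: "D = M3 i 0 0 0 j 0 0 0 k" "i \<in> eis" "j \<in> eis" "k \<in> eis" "i*j*k = 1"
    using DD(1) D3_iff by blast
  obtain i' j' k' where D': "D' = M3 i' 0 0 0 j' 0 0 0 k'" "i' \<in> eis" "j' \<in> eis" "k' \<in> eis" "i'*j'*k' = 1"
    using DD(2) D3_iff by blast
  obtain \<alpha> \<beta> \<gamma> where U: "U = M3 1 \<alpha> \<beta> 0 1 \<gamma> 0 0 1" "\<alpha> \<in> digits3" "\<beta> \<in> digits3" "\<gamma> \<in> digits3"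
    using UU(1) U3_iff by blast
  obtain \<alpha>' \<beta>' \<gamma>' where U': "U' = M3 1 \<alpha>' \<beta>' 0 1 \<gamma>' 0 0 1" "\<alpha>' \<in> digits3" "\<beta>' \<in> digits3" "\<gamma>' \<in> digits3"
    using UU(2) U3_iff by blast
  obtain x z w where G: "G = M3 1 x z 0 1 w 0 0 1" "eis_dvd 3 x" "eis_dvd 3 z" "eis_dvd 3 w"
    using GG(1) Gamma_inf3_iff by blast
  obtain x' z' w' where G': "G' = M3 1 x' z' 0 1 w' 0 0 1" "eis_dvd 3 x'" "eis_dvd 3 z'" "eis_dvd 3 w'"
    using GG(2) Gamma_inf3_iff by blast
  define a b c dd where "a = y$$(0,0)" "b = y$$(0,1)" "c = y$$(1,0)" "dd = y$$(1,1)"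
  define a' b' c' dd' where "a' = y'$$(0,0)" "b' = y'$$(0,1)" "c' = y'$$(1,0)" "dd' = y'$$(1,1)"
  have yf: "y \<in> carrier_mat 2 2" "a \<in> eis" "b \<in> eis" "c \<in> eis" "dd \<in> eis" "a*dd - b*c = 1"
    "c = 0 \<longrightarrow> y = 1\<^sub>m 2" "c \<noteq> 0 \<longrightarrow> c \<in> C \<and> a \<in> R c"
    using Y_facts[OF C yY] unfolding a_b_c_dd_def by auto
  have yf': "y' \<in> carrier_mat 2 2" "a' \<in> eis" "b' \<in> eis" "c' \<in> eis" "dd' \<in> eis" "a'*dd' - b'*c' = 1"
    "c' = 0 \<longrightarrow> y' = 1\<^sub>m 2" "c' \<noteq> 0 \<longrightarrow> c' \<in> C \<and> a' \<in> R c'"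
    using Y_facts[OF C yY'] unfolding a'_b'_c'_dd'_def by auto
  have iu: "i \<noteq> 0" "inverse i \<in> eis" using unit_from_prod[OF D(2-5)] by auto
  have ju: "j \<noteq> 0" "inverse j \<in> eis" using unit_from_prod[of j k i] D(2-5) by (auto simp: ac_simps)
  have ku: "k \<noteq> 0" "inverse k \<in> eis" using unit_from_prod[of k i j] D(2-5) by (auto simp: ac_simps)
  have ju': "j' \<noteq> 0" "inverse j' \<in> eis" using unit_from_prod[of j' k' i'] D'(2-5) by (auto simp: ac_simps)
  define T T' where "T = \<gamma> + w" "T' = \<gamma>' + w'"
  have "M3 i (i*(\<alpha>+x)) (i*(z+\<alpha>*w+\<beta>)) 0 (dd*j) (dd*j*(\<gamma>+w) - b*k) 0 (-c*j) (-c*j*(\<gamma>+w) + a*k)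
      = M3 i' (i'*(\<alpha>'+x')) (i'*(z'+\<alpha>'*w'+\<beta>')) 0 (dd'*j') (dd'*j'*(\<gamma>'+w') - b'*k') 0 (-c'*j') (-c'*j'*(\<gamma>'+w') + a'*k')"
    using eq unfolding phi2_inv2 D(1) U(1) G(1) D'(1) U'(1) G'(1) a_b_c_dd_def[symmetric] a'_b'_c'_dd'_def[symmetric]
      prod_formula .
  then have E: "i = i'" "i*(\<alpha>+x) = i'*(\<alpha>'+x')" "i*(z+\<alpha>*w+\<beta>) = i'*(z'+\<alpha>'*w'+\<beta>')"
    "dd*j = dd'*j'" "dd*j*T - b*k = dd'*j'*T' - b'*k'" "c*j = c'*j'" "-c*j*T + a*k = -c'*j'*T' + a'*k'"
    unfolding M3_inj T_T'_def by auto
  have s1: "c = c' \<and> j = j' \<and> dd = dd'"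
  proof (cases "c = 0")
    case True
    then have "y = 1\<^sub>m 2" using yf by auto
    then have "dd = 1" unfolding a_b_c_dd_def by simp
    from True E(6) ju' have "c' = 0" by simp
    then have "y' = 1\<^sub>m 2" using yf' by auto
    then have "dd' = 1" unfolding a'_b'_c'_dd'_def by simp
    show ?thesis using True \<open>c' = 0\<close> \<open>dd = 1\<close> \<open>dd' = 1\<close> E(4) by simp
  next
    case False
    then have c': "c' \<noteq> 0" using E(6) ju by auto
    have cC: "c \<in> C" "c' \<in> C" using yf(8) yf'(8) False c' by auto
    define u where "u = j' * inverse j"
    have uu: "u \<in> eis_units" unfolding units_iff u_def using ju ju' D'(3) D(3)
      by (auto simp: eis_mult) 
    have cu: "c = u * c'" unfolding u_def using E(6) ju(1) by (simp add: field_simps)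
    have "c \<in> eis - {0}" using yf(4) False by auto
    then have "\<exists>!c0. c0 \<in> C \<and> (\<exists>u\<in>eis_units. c = u * c0)" using C unfolding nonzero_reps_def by blast
    moreover have "1 \<in> eis_units" unfolding units_iff by simp
    ultimately have "c = c'" using cu uu cC by (metis mult_1)
    then have "j = j'" using E(6) False by simp
    then have "dd = dd'" using E(4) ju by simp
    then show ?thesis using \<open>c = c'\<close> \<open>j = j'\<close> by simp
  qed
  have kk: "k = k'"
  proof -
    have "c*(dd*j*T - b*k) + dd*(-c*j*T + a*k) = (a*dd - b*c)*k" by (simp add: algebra_simps)
    moreover have "c'*(dd'*j'*T' - b'*k') + dd'*(-c'*j'*T' + a'*k') = (a'*dd' - b'*c')*k'" by (simp add: algebra_simps)
    ultimately show ?thesis using E(5,7) s1 yf(6) yf'(6) by simp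
  qed
  have yy: "y = y'"
  proof (cases "c = 0")
    case True
    then show ?thesis using yf yf' s1 by auto
  next
    case False
    have "(a - a') * k = c * (j*T - j*T')" using E(7) s1 kk by (simp add: algebra_simps)
    then have "a - a' = c * ((j*T - j*T') * inverse k)" using ku by (simp add: field_simps)
    moreover have "(j*T - j*T') * inverse k \<in> eis"
      unfolding T_T'_def using ku D(3) U(4) U'(4) G(4) G'(4) digits3_sub dvd3_eis by blast
    ultimately have dv: "eis_dvd c (a - a')" unfolding eis_dvd_def by blast
    have "c \<in> C" "a \<in> R c" "a' \<in> R c" using yf(8) yf'(8) False s1 by auto
    with R yf(2) have "\<exists>!r. r \<in> R c \<and> eis_dvd c (a - r)" "R c \<subseteq> eis" unfolding residue_reps_def by auto
    moreover have "eis_dvd c (a - a)" by (simp add: eis_dvd_0)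
    ultimately have "a = a'" using dv \<open>a \<in> R c\<close> \<open>a' \<in> R c\<close> by blast
    then have "b = b'" using yf(6) yf'(6) s1 False by (simp add: algebra_simps) 
    then show ?thesis using \<open>a = a'\<close> s1 yf(1) yf'(1) unfolding a_b_c_dd_def a'_b'_c'_dd'_def
      by (intro mat2_eqI) auto
  qed
  have TT: "T = T'"
  proof -
    have b': "b = b'" "a = a'" using yy unfolding a_b_c_dd_def a'_b'_c'_dd'_def by auto
    have x1: "dd*j*T - b*k = dd*j*T' - b*k" using E(5) s1 kk b' by (simp only:)
    have x2: "-c*j*T + a*k = -c*j*T' + a*k" using E(7) s1 kk b' by (simp only:)
    have h1: "dd*j*(T-T') = 0"
    proof -
      have "dd*j*(T-T') = (dd*j*T - b*k) - (dd*j*T' - b*k)" by (simp add: algebra_simps)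
      with x1 show ?thesis by simp
    qed
    have h2: "c*j*(T-T') = 0"
    proof -
      have "c*j*(T-T') = (-c*j*T' + a*k) - (-c*j*T + a*k)" by (simp add: algebra_simps)
      with x2 show ?thesis by simp
    qed
    have "(a*dd - b*c)*(j*(T-T')) = a*(dd*j*(T-T')) - b*(c*j*(T-T'))" by (simp add: algebra_simps)
    then have "j*(T-T') = 0" using h1 h2 yf(6) by simp
    then show ?thesis using ju by simp
  qed
  have aa: "\<alpha> = \<alpha>'" using E(2) E(1) iu(1) digit_eq[OF U(2) U'(2) G(2) G'(2)] by simp
  have gg: "\<gamma> = \<gamma>'" using TT digit_eq[OF U(4) U'(4) G(4) G'(4)] unfolding T_T'_def by simp
  have bb: "\<beta> = \<beta>'"
  proof -
    have "z + \<alpha>*w + \<beta> = z' + \<alpha>*w' + \<beta>'" using E(3) E(1) iu(1) aa by simp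
    then have "\<beta> + (z + \<alpha>*w) = \<beta>' + (z' + \<alpha>*w')" by (simp add: algebra_simps)
    moreover have "eis_dvd 3 (z + \<alpha>*w)" "eis_dvd 3 (z' + \<alpha>*w')"
      using G(3,4) G'(3,4) U(2) digits3_sub by (auto intro!: eis_dvd_add eis_dvd_mult)
    ultimately show ?thesis using digit_eq[OF U(3) U'(3)] by blast
  qed
  show ?thesis using yy D(1) D'(1) U(1) U'(1) E(1) s1 kk aa bb gg by simp
qed


theorem theorem2p14:
  fixes C :: "complex set" and R :: "complex \<Rightarrow> complex set"
  assumes "nonzero_reps C" and "residue_reps C R"
  shows "Delta2 = (\<Union>y\<in>Y C R. \<Union>d\<in>D3. \<Union>u\<in>U3. piece y d u)
    \<and> (\<forall>y\<in>Y C R. \<forall>d\<in>D3. \<forall>u\<in>U3. \<forall>y'\<in>Y C R. \<forall>d'\<in>D3. \<forall>u'\<in>U3.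
         (y, d, u) \<noteq> (y', d', u') \<longrightarrow> piece y d u \<inter> piece y' d' u' = {})"
proof (intro conjI ballI impI)
  show "Delta2 = (\<Union>y\<in>Y C R. \<Union>d\<in>D3. \<Union>u\<in>U3. piece y d u)"
  proof
    show "Delta2 \<subseteq> (\<Union>y\<in>Y C R. \<Union>d\<in>D3. \<Union>u\<in>U3. piece y d u)"
      using exist[OF assms] by blast
    show "(\<Union>y\<in>Y C R. \<Union>d\<in>D3. \<Union>u\<in>U3. piece y d u) \<subseteq> Delta2"
      unfolding piece_def using piece_sub[OF assms(1)] by blast
  qed
next
  fix y d u y' d' u'
  assume h: "y \<in> Y C R" "d \<in> D3" "u \<in> U3" "y' \<in> Y C R" "d' \<in> D3" "u' \<in> U3" "(y, d, u) \<noteq> (y', d', u')"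
  show "piece y d u \<inter> piece y' d' u' = {}"
  proof (rule ccontr)
    assume "piece y d u \<inter> piece y' d' u' \<noteq> {}"
    then obtain g g' where "g \<in> Gamma_inf3" "g' \<in> Gamma_inf3"
      "phi2 (inv2 y) * d * u * g = phi2 (inv2 y') * d' * u' * g'" unfolding piece_def by blast
    from disjoint[OF assms h(1,4,2,5,3,6) this] h(7) show False by simp
  qed
qed

end
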